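(* The asymptotic completion of a developable Möbius strip has at least one singular point other than cuspidal edge singularities.
   Context: Let $\gamma:\mathbb{R}\to\mathbb{R}^3$ be a $C^\infty$ regular curve which is $l$-periodic ($\gamma(s+l)=\gamma(s)$, $\gamma'(s)\neq 0$), and let $\xi$ be a $C^\infty$ vector field along $\gamma$ which is $l$-odd-periodic ($\xi(s+l)=-\xi(s)$), with $\gamma'(s)$ and $\xi(s)$ linearly independent for every $s$. The immersion $F(s,u)=\gamma(s)+u\xi(s)$ ($s\in\mathbb{R}$, $|u|<\epsilon$, $\epsilon>0$ small) is called a ruled Möbius strip with generating curve $\gamma$ and ruling vector field $\xi$; it is called developable if it is flat, i.e. $\det(\gamma',\xi,\xi')\equiv 0$. The asymptotic completion (a-completion) of $F$ is the $C^\infty$ map $\tilde F(s,u)=\gamma(s)+u\xi(s)$ defined for all $(s,u)\in\mathbb{R}^2$ (regarded on the quotient identifying $(s,u)$ with $(s+l,-u)$). A singular point is a point where the Jacobi matrix has rank less than $2$. A cuspidal edge is a map germ right-left equivalent (i.e. equal after diffeomorphic changes of coordinates in source and target) to $f_C(u,v)=(2u^3,-3u^2,v)$ at the origin. *)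

theory Defs
  imports "HOL-Analysis.Analysis"
begin

text \<open>D vs x is the k-th derivative of f at x (k = length vs) applied to the
  directions in vs; D (v # vs) x is the derivative of D vs at x in direction v.\<close>
definition smooth_on :: "'a::euclidean_space set \<Rightarrow> ('a \<Rightarrow> 'b::real_normed_vector) \<Rightarrow> bool" where
  "smooth_on S f \<longleftrightarrow>
     (\<exists>D :: 'a list \<Rightarrow> 'a \<Rightarrow> 'b.
        (\<forall>x\<in>S. D [] x = f x) \<and>
        (\<forall>vs. \<forall>x\<in>S. (D vs has_derivative (\<lambda>v. D (v # vs) x)) (at x)))"

definition diffeo_on :: "'a::euclidean_space set \<Rightarrow> ('a \<Rightarrow> 'a) \<Rightarrow> bool" where
  "diffeo_on U \<phi> \<longleftrightarrow> open U \<and> open (\<phi> ` U) \<and> inj_on \<phi> U \<and>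
     smooth_on U \<phi> \<and> smooth_on (\<phi> ` U) (inv_into U \<phi>)"

definition rl_equivalent ::
  "('a::euclidean_space \<Rightarrow> 'b::euclidean_space) \<Rightarrow> 'a \<Rightarrow> ('a \<Rightarrow> 'b) \<Rightarrow> 'a \<Rightarrow> bool" where
  "rl_equivalent f p g q \<longleftrightarrow>
     (\<exists>U \<phi> W \<Psi>. p \<in> U \<and> diffeo_on U \<phi> \<and> \<phi> p = q \<and>
        f p \<in> W \<and> diffeo_on W \<Psi> \<and> \<Psi> (f p) = g q \<and> f ` U \<subseteq> W \<and>
        (\<forall>x\<in>U. \<Psi> (f x) = g (\<phi> x)))"

definition singular_point :: "(real \<times> real \<Rightarrow> real^3) \<Rightarrow> real \<times> real \<Rightarrow> bool" where
  "singular_point f p \<longleftrightarrow> (\<exists>f'. (f has_derivative f') (at p) \<and> dim (range f') < 2)"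

definition cuspidal_edge_model :: "real \<times> real \<Rightarrow> real^3" where
  "cuspidal_edge_model = (\<lambda>(u, v). vector [2 * u ^ 3, - 3 * u ^ 2, v])"

definition is_cuspidal_edge :: "(real \<times> real \<Rightarrow> real^3) \<Rightarrow> real \<times> real \<Rightarrow> bool" where
  "is_cuspidal_edge f p \<longleftrightarrow> rl_equivalent f p cuspidal_edge_model (0, 0)"

definition a_completion :: "(real \<Rightarrow> real^3) \<Rightarrow> (real \<Rightarrow> real^3) \<Rightarrow> real \<times> real \<Rightarrow> real^3" where
  "a_completion \<gamma> \<xi> = (\<lambda>(s, u). \<gamma> s + u *\<^sub>R \<xi> s)"

definition developable_moebius_strip :: "real \<Rightarrow> (real \<Rightarrow> real^3) \<Rightarrow> (real \<Rightarrow> real^3) \<Rightarrow> bool" where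
  "developable_moebius_strip l \<gamma> \<xi> \<longleftrightarrow>
     l > 0 \<and> smooth_on UNIV \<gamma> \<and> smooth_on UNIV \<xi> \<and>
     (\<forall>s. \<gamma> (s + l) = \<gamma> s) \<and> (\<forall>s. vector_derivative \<gamma> (at s) \<noteq> 0) \<and>
     (\<forall>s. \<xi> (s + l) = - \<xi> s) \<and>
     (\<forall>s a b. a *\<^sub>R vector_derivative \<gamma> (at s) + b *\<^sub>R \<xi> s = 0 \<longrightarrow> a = 0 \<and> b = 0) \<and>
     (\<forall>s. det (vector [vector_derivative \<gamma> (at s), \<xi> s, vector_derivative \<xi> (at s)]
              :: real^3^3) = 0)"

end

theory Submission
  imports Defs
begin


lemma smooth_has_deriv:
  assumes "smooth_on S f" "open S" "x \<in> S"
  shows "\<exists>f'. (f has_derivative f') (at x)"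
proof -
  obtain D where D0: "\<forall>x\<in>S. D [] x = f x" and DD: "\<forall>vs. \<forall>x\<in>S. (D vs has_derivative (\<lambda>v. D (v # vs) x)) (at x)"
    using assms(1) unfolding smooth_on_def by blast
  have "(f has_derivative (\<lambda>v. D [v] x)) (at x)"
    using has_derivative_transform_within_open[OF DD[THEN spec[where x="[]"], THEN bspec, OF assms(3)] assms(2) assms(3)] D0 by blast
  then show ?thesis by blast
qed

lemma smooth_curve:
  fixes f :: "real \<Rightarrow> 'b::real_normed_vector"
  assumes "smooth_on UNIV f"
  shows "\<And>s. (f has_vector_derivative (vector_derivative f (at s))) (at s)"
    and "\<And>s. (\<lambda>s. vector_derivative f (at s)) differentiable (at s)"
proof -
  obtain D where D0: "\<forall>x. D [] x = f x" and DD: "\<forall>vs x. (D vs has_derivative (\<lambda>v. D (v # vs) x)) (at x)"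
    using assms(1) unfolding smooth_on_def by blast
  have Df: "D [] = f" using D0 by auto
  have hv: "(f has_vector_derivative D [1] s) (at s)" for s
  proof -
    have d: "(f has_derivative (\<lambda>v. D [v] s)) (at s)" using DD Df by metis
    have lin: "linear (\<lambda>v. D [v] s)" using d has_derivative_linear by blast
    have "(\<lambda>v. D [v] s) = (\<lambda>v. v *\<^sub>R D [1] s)"
    proof
      fix v :: real
      have "D [v *\<^sub>R 1] s = v *\<^sub>R D [1] s" using linear_scale[OF lin] by blast
      then show "D [v] s = v *\<^sub>R D [1] s" by simp
    qed
    then show ?thesis using d unfolding has_vector_derivative_def by simp
  qed
  have vd: "vector_derivative f (at s) = D [1] s" for s
    using hv vector_derivative_at by blast
  show "(f has_vector_derivative (vector_derivative f (at s))) (at s)" for s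
    using hv vd by simp
  show "(\<lambda>s. vector_derivative f (at s)) differentiable (at s)" for s
    using DD vd unfolding differentiable_def by (metis ext)
qed



lemma bb_differentiable:
  assumes "bounded_bilinear h" "f differentiable (at x)" "g differentiable (at x)"
  shows "(\<lambda>x. h (f x) (g x)) differentiable (at x)"
proof -
  obtain f' g' where "(f has_derivative f') (at x)" "(g has_derivative g') (at x)"
    using assms unfolding differentiable_def by blast
  from bounded_bilinear.FDERIV[OF assms(1) this] show ?thesis unfolding differentiable_def by blast
qed

lemma bb_cross: "bounded_bilinear (cross3 :: real^3 \<Rightarrow> real^3 \<Rightarrow> real^3)"
  using bilinear_cross bilinear_conv_bounded_bilinear by blast

lemma decomp_ident:
  fixes g x y :: "real^3"
  shows "((cross3 g x) \<bullet> (cross3 g x)) *\<^sub>R y = ((cross3 y x) \<bullet> (cross3 g x)) *\<^sub>R g + ((cross3 g y) \<bullet> (cross3 g x)) *\<^sub>R x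
         + det (vector [g, x, y] :: real^3^3) *\<^sub>R (cross3 g x)"
  unfolding vec_eq_iff forall_3
  by (simp add: cross3_def inner_vec_def sum_3 det_3 vector_def) algebra

lemma indep_cross:
  fixes g x :: "real^3"
  assumes "\<forall>a b. a *\<^sub>R g + b *\<^sub>R x = 0 \<longrightarrow> a = 0 \<and> b = 0"
  shows "cross3 g x \<noteq> 0"
proof
  assume "cross3 g x = 0"
  then have "collinear {0, g, x}" using cross_eq_0 by blast
  then consider "g = 0" | "x = 0" | c where "x = c *\<^sub>R g" using collinear_lemma by blast
  then show False
  proof cases
    case 1 then show ?thesis using assms[rule_format, of 1 0] by simp
  next
    case 2 then show ?thesis using assms[rule_format, of 0 1] by simp
  next
    case 3 then show ?thesis using assms[rule_format, of c "-1"] by simp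
  qed
qed



lemma antideriv_interval:
  fixes b :: "real \<Rightarrow> real"
  assumes "continuous_on UNIV b"
  shows "\<exists>B. \<forall>x\<in>{c<..<d}. (B has_real_derivative b x) (at x)"
proof -
  have "((\<lambda>x. integral {c..x} b) has_real_derivative b x) (at x)" if "x \<in> {c<..<d}" for x
  proof -
    have "((\<lambda>x. integral {c..x} b) has_real_derivative b x) (at x within {c..d})"
      using integral_has_real_derivative[of c d b x] assms that continuous_on_subset by force
    then show ?thesis using at_within_Icc_at[of c x d] that by simp
  qed
  then show ?thesis by blast
qed

lemma interior_max:
  fixes f f' :: "real \<Rightarrow> real"
  assumes der: "\<forall>x\<in>{c-l..c+l}. (f has_real_derivative f' x) (at x)"
    and pos: "f c > 0" and l1: "f (c - l) \<le> 0" and l2: "f (c + l) \<le> 0" and lpos: "l > 0"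
  shows "\<exists>t. f t > 0 \<and> f' t = 0"
proof -
  have cont: "continuous_on {c-l..c+l} f"
    using der by (meson DERIV_isCont continuous_at_imp_continuous_on)
  obtain t where t: "t \<in> {c-l..c+l}" and tmax: "\<forall>y\<in>{c-l..c+l}. f y \<le> f t"
    using continuous_attains_sup[OF compact_Icc _ cont] lpos by auto
  have "f t \<ge> f c" using tmax lpos by auto
  then have ft: "f t > 0" using pos by linarith
  have "t \<noteq> c - l" "t \<noteq> c + l" using ft l1 l2 by auto
  with t have tin: "c - l < t" "t < c + l" by auto
  define d where "d = min (t - (c - l)) (c + l - t)"
  have dpos: "0 < d" using tin d_def by auto
  have "\<forall>y. \<bar>t - y\<bar> < d \<longrightarrow> f y \<le> f t"
    using tmax d_def by (auto simp: abs_if split: if_splits)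
  then have "f' t = 0" using DERIV_local_max[OF der[rule_format, of t] dpos] t by blast
  then show ?thesis using ft by blast
qed

lemma core_rolle:
  fixes A A' b :: "real \<Rightarrow> real"
  assumes der: "\<forall>x. (A has_real_derivative A' x) (at x)"
    and cb: "continuous_on UNIV b" and Ac: "A c \<noteq> 0"
    and per: "\<forall>s. A (s + l) = - A s" and lpos: "l > 0"
  shows "\<exists>t. A t \<noteq> 0 \<and> A' t = b t * A t"
proof -
  obtain B where B: "\<forall>x\<in>{c-l-1<..<c+l+1}. (B has_real_derivative b x) (at x)"
    using antideriv_interval[OF cb] by blast
  define f where "f = (\<lambda>s. exp (- B s) * A s)"
  define f' where "f' = (\<lambda>s. exp (- B s) * (A' s - b s * A s))"
  have df: "\<forall>x\<in>{c-l..c+l}. (f has_real_derivative f' x) (at x)"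
  proof
    fix x assume "x \<in> {c-l..c+l}"
    then have "x \<in> {c-l-1<..<c+l+1}" by auto
    then have "(B has_real_derivative b x) (at x)" using B by blast
    moreover have "(A has_real_derivative A' x) (at x)" using der by blast
    ultimately have "(f has_real_derivative (exp (- B x) * (- b x)) * A x + exp (- B x) * A' x) (at x)"
      unfolding f_def by (auto intro!: derivative_eq_intros)
    then show "(f has_real_derivative f' x) (at x)" unfolding f'_def by (simp add: algebra_simps)
  qed
  have Am: "A (c - l) = - A c" using per[rule_format, of "c - l"] by simp
  have Ap: "A (c + l) = - A c" using per by simp
  show ?thesis
  proof (cases "A c > 0")
    case True
    have "f c > 0" "f (c - l) \<le> 0" "f (c + l) \<le> 0" using True Am Ap unfolding f_def
      by (auto simp: mult_le_0_iff)
    then obtain t where "f t > 0" "f' t = 0" using interior_max[OF df _ _ _ lpos] by blast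
    then have "A t \<noteq> 0" "A' t = b t * A t" unfolding f_def f'_def by auto
    then show ?thesis by blast
  next
    case False
    then have Aneg: "A c < 0" using Ac by auto
    have df2: "\<forall>x\<in>{c-l..c+l}. ((\<lambda>s. - f s) has_real_derivative - f' x) (at x)"
      using df by (auto intro: derivative_intros)
    have "- f c > 0" "- f (c - l) \<le> 0" "- f (c + l) \<le> 0" using Aneg Am Ap unfolding f_def
      by (auto simp: mult_less_0_iff mult_le_0_iff)
    then obtain t where "- f t > 0" "- f' t = 0" using interior_max[OF df2 _ _ _ lpos] by blast
    then have "A t \<noteq> 0" "A' t = b t * A t" unfolding f_def f'_def by auto
    then show ?thesis by blast
  qed
qed

lemma not_all_zero:
  fixes xi :: "real \<Rightarrow> real^3" and xi1 :: "real \<Rightarrow> real^3" and b :: "real \<Rightarrow> real"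
  assumes der: "\<forall>s. (xi has_vector_derivative xi1 s) (at s)"
    and eq: "\<forall>s. xi1 s = b s *\<^sub>R xi s" and cb: "continuous_on UNIV b"
    and per: "xi l = - xi 0" and nz: "xi 0 \<noteq> 0" and lpos: "l > 0"
  shows False
proof -
  obtain B where B: "\<forall>x\<in>{-1<..<l+1}. (B has_real_derivative b x) (at x)"
    using antideriv_interval[OF cb] by blast
  define eta where "eta = (\<lambda>s. exp (- B s) *\<^sub>R xi s)"
  have "(eta has_derivative (\<lambda>h. 0)) (at x within {0..l})" if "x \<in> {0..l}" for x
  proof -
    have "x \<in> {-1<..<l+1}" using that by auto
    then have "(B has_real_derivative b x) (at x)" using B by blast
    then have "((\<lambda>s. - B s) has_real_derivative - b x) (at x)" by (rule DERIV_minus)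
    then have "((\<lambda>s. exp (- B s)) has_real_derivative exp (- B x) * (- b x)) (at x)"
      by (rule DERIV_fun_exp)
    from has_vector_derivative_scaleR[OF this der[rule_format, of x]]
    have "(eta has_vector_derivative (exp (- B x) *\<^sub>R xi1 x + (exp (- B x) * (- b x)) *\<^sub>R xi x)) (at x)"
      unfolding eta_def .
    moreover have "exp (- B x) *\<^sub>R xi1 x + (exp (- B x) * (- b x)) *\<^sub>R xi x = 0"
      using eq[rule_format, of x] by (simp add: scaleR_scaleR[symmetric] del: scaleR_scaleR)
    ultimately have "(eta has_vector_derivative 0) (at x)" by simp
    then show ?thesis unfolding has_vector_derivative_def by (simp add: has_derivative_at_withinI)
  qed
  then obtain k where "\<forall>x\<in>{0..l}. eta x = k"
    using has_derivative_zero_constant[of "{0..l}" eta] by auto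
  then have "eta l = eta 0" using lpos by auto
  then have "exp (- B l) *\<^sub>R (- xi 0) = exp (- B 0) *\<^sub>R xi 0" unfolding eta_def per by simp
  then have e1: "exp (- B 0) *\<^sub>R xi 0 = - (exp (- B l) *\<^sub>R xi 0)" by simp
  have "(exp (- B l) + exp (- B 0)) *\<^sub>R xi 0 = exp (- B l) *\<^sub>R xi 0 + exp (- B 0) *\<^sub>R xi 0"
    by (rule scaleR_left_distrib)
  then have "(exp (- B l) + exp (- B 0)) *\<^sub>R xi 0 = 0" using e1 by simp
  moreover have "exp (- B l) + exp (- B 0) \<noteq> 0" by (smt (verit) exp_gt_zero)
  ultimately show False using nz by simp
qed


lemma g_model_eq:
  "cuspidal_edge_model = (\<lambda>z. (2 * fst z ^ 3) *\<^sub>R (axis 1 1 :: real^3) + (- 3 * fst z ^ 2) *\<^sub>R axis 2 1 + snd z *\<^sub>R axis 3 1)"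
  unfolding cuspidal_edge_model_def
  by (auto simp: fun_eq_iff vec_eq_iff forall_3 axis_def vector_3)

lemma g_model_deriv:
  fixes z :: "real \<times> real"
  shows "(cuspidal_edge_model has_derivative (\<lambda>h. (6 * fst z ^ 2 * fst h) *\<^sub>R (axis 1 1 :: real^3) + (- 6 * fst z * fst h) *\<^sub>R axis 2 1 + snd h *\<^sub>R axis 3 1)) (at z)"
proof -
  have f1: "((\<lambda>z::real\<times>real. 2 * fst z ^ 3) has_derivative (\<lambda>h. 6 * fst z ^ 2 * fst h)) (at z)"
    by (auto intro!: derivative_eq_intros)
  have f2: "((\<lambda>z::real\<times>real. - 3 * fst z ^ 2) has_derivative (\<lambda>h. - 6 * fst z * fst h)) (at z)"
    by (auto intro!: derivative_eq_intros)
  have f3: "((\<lambda>z::real\<times>real. snd z) has_derivative (\<lambda>h. snd h)) (at z)"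
    by (auto intro!: derivative_eq_intros)
  have "((\<lambda>z. (2 * fst z ^ 3) *\<^sub>R (axis 1 1 :: real^3) + (- 3 * fst z ^ 2) *\<^sub>R axis 2 1 + snd z *\<^sub>R axis 3 1) has_derivative
     (\<lambda>h. (6 * fst z ^ 2 * fst h) *\<^sub>R (axis 1 1 :: real^3) + (- 6 * fst z * fst h) *\<^sub>R axis 2 1 + snd h *\<^sub>R axis 3 1)) (at z)"
    by (intro has_derivative_add has_derivative_scaleR_left f1 f2 f3)
  then show ?thesis unfolding g_model_eq .
qed

lemma F_deriv:
  fixes \<gamma> \<xi> g1 x1 :: "real \<Rightarrow> real^3"
  assumes "(\<gamma> has_vector_derivative g1 s) (at s)" "(\<xi> has_vector_derivative x1 s) (at s)"
  shows "(a_completion \<gamma> \<xi> has_derivative (\<lambda>h. fst h *\<^sub>R (g1 s + u *\<^sub>R x1 s) + snd h *\<^sub>R \<xi> s)) (at (s, u))"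
proof -
  have e: "a_completion \<gamma> \<xi> = (\<lambda>z. \<gamma> (fst z) + snd z *\<^sub>R \<xi> (fst z))"
    unfolding a_completion_def by auto
  have d1: "((\<lambda>z. \<gamma> (fst z)) has_derivative (\<lambda>h. fst h *\<^sub>R g1 s)) (at (s, u))"
    using diff_chain_at[OF has_derivative_fst[OF has_derivative_ident], of \<gamma> "\<lambda>h. h *\<^sub>R g1 s" "(s,u)"]
      assms(1) unfolding has_vector_derivative_def by (simp add: o_def)
  have d2: "((\<lambda>z. \<xi> (fst z)) has_derivative (\<lambda>h. fst h *\<^sub>R x1 s)) (at (s, u))"
    using diff_chain_at[OF has_derivative_fst[OF has_derivative_ident], of \<xi> "\<lambda>h. h *\<^sub>R x1 s" "(s,u)"]
      assms(2) unfolding has_vector_derivative_def by (simp add: o_def)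
  have "((\<lambda>z. \<gamma> (fst z) + snd z *\<^sub>R \<xi> (fst z)) has_derivative
      (\<lambda>h. fst h *\<^sub>R g1 s + (snd (s,u) *\<^sub>R (fst h *\<^sub>R x1 s) + snd h *\<^sub>R \<xi> (fst (s,u))))) (at (s, u))"
    by (intro has_derivative_add d1 has_derivative_scaleR d2 has_derivative_snd has_derivative_ident)
  then show ?thesis unfolding e by (simp add: algebra_simps)
qed

theorem mainTheorem1:
  fixes l :: real and \<gamma> \<xi> :: "real \<Rightarrow> real^3"
  assumes "developable_moebius_strip l \<gamma> \<xi>"
  shows "\<exists>p. singular_point (a_completion \<gamma> \<xi>) p \<and>
             \<not> is_cuspidal_edge (a_completion \<gamma> \<xi>) p"
proof -
  define g1 where "g1 = (\<lambda>s. vector_derivative \<gamma> (at s))"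
  define x1 where "x1 = (\<lambda>s. vector_derivative \<xi> (at s))"
  have lpos: "l > 0" and sg: "smooth_on UNIV \<gamma>" and sx: "smooth_on UNIV \<xi>"
    and gper: "\<forall>s. \<gamma> (s + l) = \<gamma> s" and xper: "\<forall>s. \<xi> (s + l) = - \<xi> s"
    and indep: "\<forall>s a b. a *\<^sub>R g1 s + b *\<^sub>R \<xi> s = 0 \<longrightarrow> a = 0 \<and> b = 0"
    and detz: "\<forall>s. det (vector [g1 s, \<xi> s, x1 s] :: real^3^3) = 0"
    using assms unfolding developable_moebius_strip_def g1_def x1_def by auto
  have dg: "\<And>s. (\<gamma> has_vector_derivative g1 s) (at s)" using smooth_curve(1)[OF sg] g1_def by simp
  have dx: "\<And>s. (\<xi> has_vector_derivative x1 s) (at s)" using smooth_curve(1)[OF sx] x1_def by simp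
  have dg1: "\<And>s. g1 differentiable (at s)" using smooth_curve(2)[OF sg] g1_def by simp
  have dx1: "\<And>s. x1 differentiable (at s)" using smooth_curve(2)[OF sx] x1_def by simp
  have dxi: "\<And>s. \<xi> differentiable (at s)" using dx unfolding has_vector_derivative_def differentiable_def by blast
  define N where "N = (\<lambda>s. cross3 (g1 s) (\<xi> s))"
  define A where "A = (\<lambda>s. inner (cross3 (x1 s) (\<xi> s)) (N s) / inner (N s) (N s))"
  define Bc where "Bc = (\<lambda>s. inner (cross3 (g1 s) (x1 s)) (N s) / inner (N s) (N s))"
  have NN: "inner (N s) (N s) \<noteq> 0" for s
    using indep_cross[of "g1 s" "\<xi> s"] indep unfolding N_def by auto
  have decomp: "x1 s = A s *\<^sub>R g1 s + Bc s *\<^sub>R \<xi> s" for s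
  proof -
    have "inner (N s) (N s) *\<^sub>R x1 s = inner (cross3 (x1 s) (\<xi> s)) (N s) *\<^sub>R g1 s + inner (cross3 (g1 s) (x1 s)) (N s) *\<^sub>R \<xi> s"
      using decomp_ident[of "g1 s" "\<xi> s" "x1 s"] detz unfolding N_def by simp
    then have "x1 s = (1 / inner (N s) (N s)) *\<^sub>R (inner (cross3 (x1 s) (\<xi> s)) (N s) *\<^sub>R g1 s + inner (cross3 (g1 s) (x1 s)) (N s) *\<^sub>R \<xi> s)"
      using NN[of s] by (metis divide_self_if scaleR_one scaleR_scaleR times_divide_eq_left mult_1)
    then show ?thesis unfolding A_def Bc_def by (simp add: scaleR_add_right)
  qed
  have dN: "N differentiable (at s)" for s
    unfolding N_def by (rule bb_differentiable[OF bb_cross dg1 dxi])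
  have dA: "A differentiable (at s)" for s
  proof -
    have "(\<lambda>s. cross3 (x1 s) (\<xi> s)) differentiable (at s)" by (rule bb_differentiable[OF bb_cross dx1 dxi])
    then have "(\<lambda>s. inner (cross3 (x1 s) (\<xi> s)) (N s)) differentiable (at s)"
      by (rule bb_differentiable[OF bounded_bilinear_inner _ dN])
    moreover have "(\<lambda>s. inner (N s) (N s)) differentiable (at s)"
      by (rule bb_differentiable[OF bounded_bilinear_inner dN dN])
    ultimately show ?thesis unfolding A_def using NN by (intro differentiable_divide) auto
  qed
  have dB: "Bc differentiable (at s)" for s
  proof -
    have "(\<lambda>s. cross3 (g1 s) (x1 s)) differentiable (at s)" by (rule bb_differentiable[OF bb_cross dg1 dx1])
    then have "(\<lambda>s. inner (cross3 (g1 s) (x1 s)) (N s)) differentiable (at s)"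
      by (rule bb_differentiable[OF bounded_bilinear_inner _ dN])
    moreover have "(\<lambda>s. inner (N s) (N s)) differentiable (at s)"
      by (rule bb_differentiable[OF bounded_bilinear_inner dN dN])
    ultimately show ?thesis unfolding Bc_def using NN by (intro differentiable_divide) auto
  qed
  have cB: "continuous_on UNIV Bc"
    using dB by (simp add: continuous_at_imp_continuous_on differentiable_imp_continuous_within)
  have g1per: "g1 (s + l) = g1 s" for s
  proof -
    have "((\<gamma> \<circ> (\<lambda>s. s + l)) has_vector_derivative (1 *\<^sub>R g1 (s + l))) (at s)"
      by (rule vector_diff_chain_at[OF _ dg]) (auto intro!: derivative_eq_intros)
    moreover have "\<gamma> \<circ> (\<lambda>s. s + l) = \<gamma>" using gper by auto
    ultimately show ?thesis using vector_derivative_unique_at[OF dg[of s]] by auto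
  qed
  have x1per: "x1 (s + l) = - x1 s" for s
  proof -
    have "((\<xi> \<circ> (\<lambda>s. s + l)) has_vector_derivative (1 *\<^sub>R x1 (s + l))) (at s)"
      by (rule vector_diff_chain_at[OF _ dx]) (auto intro!: derivative_eq_intros)
    moreover have "\<xi> \<circ> (\<lambda>s. s + l) = (\<lambda>s. - \<xi> s)" using xper by auto
    moreover have "((\<lambda>s. - \<xi> s) has_vector_derivative - x1 s) (at s)" using dx by (auto intro!: derivative_eq_intros)
    ultimately show ?thesis using vector_derivative_unique_at by fastforce
  qed
  have Aper: "\<forall>s. A (s + l) = - A s"
    unfolding A_def N_def using g1per x1per xper by simp
  have xi0: "\<xi> 0 \<noteq> 0" using indep[rule_format, of 0 0 1] by auto
  obtain c where "A c \<noteq> 0"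
  proof (rule ccontr)
    assume "\<not> thesis"
    then have "\<forall>s. A s = 0" using that by blast
    then have "\<forall>s. x1 s = Bc s *\<^sub>R \<xi> s" using decomp by simp
    moreover have "\<xi> l = - \<xi> 0" using xper[rule_format, of 0] by simp
    ultimately show False using not_all_zero[OF allI[OF dx] _ cB _ xi0 lpos] by blast
  qed
  moreover have "\<forall>x. (A has_real_derivative deriv A x) (at x)"
    using dA DERIV_deriv_iff_real_differentiable by blast
  ultimately obtain t where At: "A t \<noteq> 0" and A't: "deriv A t = Bc t * A t"
    using core_rolle[of A "deriv A" Bc c l] cB Aper lpos by blast
  define u0 where "u0 = - 1 / A t"
  define F where "F = a_completion \<gamma> \<xi>"
  define p where "p = (t, u0)"
  have key0: "g1 t + u0 *\<^sub>R x1 t = (- Bc t / A t) *\<^sub>R \<xi> t"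
    using decomp[of t] At unfolding u0_def by (simp add: algebra_simps scaleR_add_right)
  have FDp: "(F has_derivative (\<lambda>h. fst h *\<^sub>R (g1 t + u0 *\<^sub>R x1 t) + snd h *\<^sub>R \<xi> t)) (at p)"
    unfolding F_def p_def by (rule F_deriv[OF dg dx])
  have sing: "singular_point F p"
    unfolding singular_point_def
  proof (intro exI conjI)
    show "(F has_derivative (\<lambda>h. fst h *\<^sub>R (g1 t + u0 *\<^sub>R x1 t) + snd h *\<^sub>R \<xi> t)) (at p)" by (rule FDp)
    have "range (\<lambda>h. fst h *\<^sub>R (g1 t + u0 *\<^sub>R x1 t) + snd h *\<^sub>R \<xi> t) \<subseteq> span {\<xi> t}"
    proof
      fix y assume "y \<in> range (\<lambda>h. fst h *\<^sub>R (g1 t + u0 *\<^sub>R x1 t) + snd h *\<^sub>R \<xi> t)"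
      then obtain h where "y = fst h *\<^sub>R (g1 t + u0 *\<^sub>R x1 t) + snd h *\<^sub>R \<xi> t" by blast
      then have "y = (fst h * (- Bc t / A t) + snd h) *\<^sub>R \<xi> t" using key0 by (simp add: scaleR_add_left scaleR_diff_left)
      then show "y \<in> span {\<xi> t}" by (simp add: span_base span_scale)
    qed
    then have "dim (range (\<lambda>h. fst h *\<^sub>R (g1 t + u0 *\<^sub>R x1 t) + snd h *\<^sub>R \<xi> t)) \<le> card {\<xi> t}"
      by (intro dim_le_card) auto
    then show "dim (range (\<lambda>h. fst h *\<^sub>R (g1 t + u0 *\<^sub>R x1 t) + snd h *\<^sub>R \<xi> t)) < 2" by simp
  qed
  have notcusp: "\<not> is_cuspidal_edge F p"
  proof
    assume "is_cuspidal_edge F p"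
    then obtain U \<phi> W \<Psi> where pU: "p \<in> U" and dU: "diffeo_on U \<phi>" and \<phi>p: "\<phi> p = (0, 0)"
      and dW: "diffeo_on W \<Psi>" and \<Psi>p: "\<Psi> (F p) = cuspidal_edge_model (0, 0)"
      and FUW: "F ` U \<subseteq> W" and comm: "\<forall>x\<in>U. \<Psi> (F x) = cuspidal_edge_model (\<phi> x)"
      unfolding is_cuspidal_edge_def rl_equivalent_def by blast
    define g where "g = cuspidal_edge_model"
    define Dg where "Dg = (\<lambda>(z::real\<times>real) (h::real\<times>real). (6 * fst z ^ 2 * fst h) *\<^sub>R (axis 1 1 :: real^3) + (- 6 * fst z * fst h) *\<^sub>R axis 2 1 + snd h *\<^sub>R axis 3 1)"
    have dgm: "\<And>z. (g has_derivative Dg z) (at z)" unfolding g_def Dg_def by (rule g_model_deriv)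
    define V where "V = \<phi> ` U"
    define Z where "Z = \<Psi> ` W"
    define \<phi>i where "\<phi>i = inv_into U \<phi>"
    define \<Psi>i where "\<Psi>i = inv_into W \<Psi>"
    have oU: "open U" and oV: "open V" and iU: "inj_on \<phi> U" and s\<phi>: "smooth_on U \<phi>" and s\<phi>i: "smooth_on V \<phi>i"
      using dU unfolding diffeo_on_def V_def \<phi>i_def by auto
    have oW: "open W" and oZ: "open Z" and iW: "inj_on \<Psi> W" and s\<Psi>: "smooth_on W \<Psi>" and s\<Psi>i: "smooth_on Z \<Psi>i"
      using dW unfolding diffeo_on_def Z_def \<Psi>i_def by auto
    have "\<forall>x\<in>U. \<exists>f'. (\<phi> has_derivative f') (at x)" using smooth_has_deriv[OF s\<phi> oU] by blast
    then obtain D\<phi> where D\<phi>: "\<forall>x\<in>U. (\<phi> has_derivative D\<phi> x) (at x)" by (metis bchoice)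
    have "\<forall>x\<in>V. \<exists>f'. (\<phi>i has_derivative f') (at x)" using smooth_has_deriv[OF s\<phi>i oV] by blast
    then obtain D\<phi>i where D\<phi>i: "\<forall>x\<in>V. (\<phi>i has_derivative D\<phi>i x) (at x)" by (metis bchoice)
    have "\<forall>x\<in>W. \<exists>f'. (\<Psi> has_derivative f') (at x)" using smooth_has_deriv[OF s\<Psi> oW] by blast
    then obtain D\<Psi> where D\<Psi>: "\<forall>x\<in>W. (\<Psi> has_derivative D\<Psi> x) (at x)" by (metis bchoice)
    have "\<forall>x\<in>Z. \<exists>f'. (\<Psi>i has_derivative f') (at x)" using smooth_has_deriv[OF s\<Psi>i oZ] by blast
    then obtain D\<Psi>i where D\<Psi>i: "\<forall>x\<in>Z. (\<Psi>i has_derivative D\<Psi>i x) (at x)" by (metis bchoice)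
    have inv1: "\<And>x. x \<in> U \<Longrightarrow> \<phi>i (\<phi> x) = x" unfolding \<phi>i_def using iU by simp
    have inv2: "\<And>y. y \<in> V \<Longrightarrow> \<phi> (\<phi>i y) = y \<and> \<phi>i y \<in> U"
      unfolding \<phi>i_def V_def by (simp add: f_inv_into_f inv_into_into)
    have inv3: "\<And>x. x \<in> W \<Longrightarrow> \<Psi>i (\<Psi> x) = x" unfolding \<Psi>i_def using iW by simp
    have inv4: "\<And>y. y \<in> Z \<Longrightarrow> \<Psi> (\<Psi>i y) = y \<and> \<Psi>i y \<in> W"
      unfolding \<Psi>i_def Z_def by (simp add: f_inv_into_f inv_into_into)
    have Ffac: "\<And>x. x \<in> U \<Longrightarrow> F x = \<Psi>i (g (\<phi> x))"
      using comm inv3 FUW unfolding g_def by (metis image_subset_iff)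
    have gZ: "\<And>x. x \<in> U \<Longrightarrow> g (\<phi> x) \<in> Z"
      using comm FUW unfolding g_def Z_def by (metis image_subset_iff image_eqI)
    have \<phi>V: "\<And>x. x \<in> U \<Longrightarrow> \<phi> x \<in> V" unfolding V_def by blast
    have rinv\<phi>: "D\<phi> (\<phi>i y) (D\<phi>i y v) = v" if "y \<in> V" for y v
    proof -
      have "((\<phi> \<circ> \<phi>i) has_derivative (D\<phi> (\<phi>i y) \<circ> D\<phi>i y)) (at y)"
        using diff_chain_at[of \<phi>i "D\<phi>i y" y \<phi> "D\<phi> (\<phi>i y)"] D\<phi>i D\<phi> inv2 that by blast
      moreover have "((\<phi> \<circ> \<phi>i) has_derivative (\<lambda>v. v)) (at y)"
        using has_derivative_transform_within_open[OF has_derivative_ident oV that, of "\<phi> \<circ> \<phi>i"] inv2 by simp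
      ultimately have "D\<phi> (\<phi>i y) \<circ> D\<phi>i y = (\<lambda>v. v)" using has_derivative_unique by blast
      then show ?thesis by (metis comp_apply)
    qed
    have rinv\<Psi>: "D\<Psi> (\<Psi>i y) (D\<Psi>i y v) = v" if "y \<in> Z" for y v
    proof -
      have "((\<Psi> \<circ> \<Psi>i) has_derivative (D\<Psi> (\<Psi>i y) \<circ> D\<Psi>i y)) (at y)"
        using diff_chain_at[of \<Psi>i "D\<Psi>i y" y \<Psi> "D\<Psi> (\<Psi>i y)"] D\<Psi>i D\<Psi> inv4 that by blast
      moreover have "((\<Psi> \<circ> \<Psi>i) has_derivative (\<lambda>v. v)) (at y)"
        using has_derivative_transform_within_open[OF has_derivative_ident oZ that, of "\<Psi> \<circ> \<Psi>i"] inv4 by simp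
      ultimately have "D\<Psi> (\<Psi>i y) \<circ> D\<Psi>i y = (\<lambda>v. v)" using has_derivative_unique by blast
      then show ?thesis by (metis comp_apply)
    qed
    have Froute: "(F has_derivative (D\<Psi>i (g (\<phi> x)) \<circ> (Dg (\<phi> x) \<circ> D\<phi> x))) (at x)" if "x \<in> U" for x
    proof -
      have "((g \<circ> \<phi>) has_derivative (Dg (\<phi> x) \<circ> D\<phi> x)) (at x)"
        using diff_chain_at[OF D\<phi>[rule_format, OF that] dgm] .
      then have "((\<Psi>i \<circ> (g \<circ> \<phi>)) has_derivative (D\<Psi>i (g (\<phi> x)) \<circ> (Dg (\<phi> x) \<circ> D\<phi> x))) (at x)"
        using diff_chain_at D\<Psi>i gZ[OF that] by (metis comp_apply)
      then show ?thesis
        using has_derivative_transform_within_open[OF _ oU that, where g=F] Ffac by (metis comp_apply)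
    qed
    have stepA: "1 + snd (\<phi>i (0, \<tau>)) * A (fst (\<phi>i (0, \<tau>))) = 0" if "(0, \<tau>) \<in> V" for \<tau>
    proof -
      define x where "x = \<phi>i (0, \<tau>)"
      have xU: "x \<in> U" and \<phi>x: "\<phi> x = (0, \<tau>)" using inv2[OF that] x_def by auto
      define s u where "s = fst x" and "u = snd x"
      have xs: "x = (s, u)" using s_def u_def by simp
      have "(F has_derivative (\<lambda>h. fst h *\<^sub>R (g1 s + u *\<^sub>R x1 s) + snd h *\<^sub>R \<xi> s)) (at x)"
        unfolding F_def xs by (rule F_deriv[OF dg dx])
      then have eqd: "(\<lambda>h. fst h *\<^sub>R (g1 s + u *\<^sub>R x1 s) + snd h *\<^sub>R \<xi> s) = D\<Psi>i (g (\<phi> x)) \<circ> (Dg (\<phi> x) \<circ> D\<phi> x)"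
        using has_derivative_unique Froute[OF xU] by blast
      define w where "w = D\<phi>i (0, \<tau>) (1, 0)"
      have Dw: "D\<phi> x w = (1, 0)" unfolding w_def x_def using rinv\<phi>[OF that] by simp
      have lin: "linear (D\<Psi>i (g (\<phi> x)))" using D\<Psi>i gZ[OF xU] has_derivative_linear by blast
      have "Dg (\<phi> x) (D\<phi> x w) = 0" unfolding Dw \<phi>x Dg_def by simp
      then have "fst w *\<^sub>R (g1 s + u *\<^sub>R x1 s) + snd w *\<^sub>R \<xi> s = 0"
        using fun_cong[OF eqd, of w] linear_0[OF lin] by simp
      then have "(fst w * (1 + u * A s)) *\<^sub>R g1 s + (fst w * u * Bc s + snd w) *\<^sub>R \<xi> s = 0"
        using decomp[of s] by (simp add: algebra_simps scaleR_add_right)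
      then have z1: "fst w * (1 + u * A s) = 0" and z2: "fst w * u * Bc s + snd w = 0"
        using indep by blast+
      have "fst w \<noteq> 0"
      proof
        assume "fst w = 0"
        then have "w = 0" using z2 by (simp add: prod_eq_iff)
        have "linear (D\<phi> x)" using D\<phi> xU has_derivative_linear by blast
        then have "D\<phi> x w = 0" using \<open>w = 0\<close> linear_0 by blast
        then show False using Dw by (metis fst_conv fst_zero zero_neq_one)
      qed
      then show ?thesis using z1 s_def u_def x_def by simp
    qed
    define T where "T = {\<tau>::real. (0, \<tau>) \<in> V}"
    have oT: "open T"
    proof -
      have "T = (\<lambda>\<tau>::real. (0::real, \<tau>)) -` V" unfolding T_def by auto
      moreover have "open ((\<lambda>\<tau>::real. (0::real, \<tau>)) -` V)"
        by (rule continuous_open_vimage[OF oV]) (intro continuous_intros)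
      ultimately show ?thesis by simp
    qed
    have p0: "\<phi>i (0, 0) = p" using inv1[OF pU] \<phi>p by simp
    have 0: "(0::real, 0::real) \<in> V" using \<phi>p pU unfolding V_def by force
    have T0: "0 \<in> T" unfolding T_def using 0 by simp
    define \<sigma> where "\<sigma> = (\<lambda>\<tau>::real. \<phi>i (0, \<tau>))"
    have emb: "((\<lambda>\<tau>::real. (0::real, \<tau>)) has_derivative (\<lambda>h. (0, h))) (at 0)"
      by (auto intro!: derivative_eq_intros)
    define v where "v = D\<phi>i (0, 0) (0, 1)"
    have lin\<phi>i: "linear (D\<phi>i (0,0))" using D\<phi>i 0 has_derivative_linear by blast
    have Dsig: "(\<sigma> has_derivative (\<lambda>h. h *\<^sub>R v)) (at 0)"
    proof -
      have "((\<phi>i \<circ> (\<lambda>\<tau>::real. (0::real, \<tau>))) has_derivative (D\<phi>i (0,0) \<circ> (\<lambda>h. (0, h)))) (at 0)"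
        using diff_chain_at[OF emb D\<phi>i[rule_format, OF 0]] by simp
      moreover have "(D\<phi>i (0,0) \<circ> (\<lambda>h. (0, h))) = (\<lambda>h. h *\<^sub>R v)"
      proof
        fix h :: real
        have "D\<phi>i (0,0) (h *\<^sub>R (0, 1)) = h *\<^sub>R v" unfolding v_def using linear_scale[OF lin\<phi>i] by blast
        then show "(D\<phi>i (0,0) \<circ> (\<lambda>h. (0, h))) h = h *\<^sub>R v" by simp
      qed
      ultimately show ?thesis unfolding \<sigma>_def by (simp add: o_def)
    qed
    have sig0: "\<sigma> 0 = p" unfolding \<sigma>_def using p0 by simp
    define S' where "S' = fst v"
    define U' where "U' = snd v"
    have kder: "((\<lambda>\<tau>. 1 + snd (\<sigma> \<tau>) * A (fst (\<sigma> \<tau>))) has_derivative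
        (\<lambda>h. 0 + (snd (\<sigma> 0) * (deriv A t * (h * S')) + h * U' * A (fst (\<sigma> 0))))) (at 0)"
    proof -
      have dfs: "((\<lambda>\<tau>. fst (\<sigma> \<tau>)) has_derivative (\<lambda>h. h * S')) (at 0)"
        using has_derivative_fst[OF Dsig] unfolding S'_def by simp
      have dsn: "((\<lambda>\<tau>. snd (\<sigma> \<tau>)) has_derivative (\<lambda>h. h * U')) (at 0)"
        using has_derivative_snd[OF Dsig] unfolding U'_def by simp
      have "(A has_derivative (\<lambda>h. deriv A t * h)) (at (fst (\<sigma> 0)))"
        using dA[of t] DERIV_deriv_iff_real_differentiable[of A t] sig0 unfolding p_def has_field_derivative_def
        by simp
      then have dAs: "((\<lambda>\<tau>. A (fst (\<sigma> \<tau>))) has_derivative (\<lambda>h. deriv A t * (h * S'))) (at 0)"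
        using diff_chain_at[OF dfs] by (simp add: o_def)
      show ?thesis
        by (intro has_derivative_add has_derivative_const has_derivative_mult dsn dAs)
    qed
    have k0: "((\<lambda>\<tau>. 1 + snd (\<sigma> \<tau>) * A (fst (\<sigma> \<tau>))) has_derivative (\<lambda>h. 0)) (at 0)"
    proof (rule has_derivative_transform_within_open[OF has_derivative_const[of "0::real"] oT T0])
      fix \<tau> assume "\<tau> \<in> T"
      then show "0 = 1 + snd (\<sigma> \<tau>) * A (fst (\<sigma> \<tau>))" using stepA unfolding T_def \<sigma>_def by simp
    qed
    have "(\<lambda>h. 0 + (snd (\<sigma> 0) * (deriv A t * (h * S')) + h * U' * A (fst (\<sigma> 0)))) = (\<lambda>h::real. 0::real)"
      using has_derivative_unique[OF kder k0] .
    from fun_cong[OF this, of 1] have rel: "u0 * (deriv A t * S') + U' * A t = 0"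
      using sig0 unfolding p_def by simp
    have r1: "((F \<circ> \<sigma>) has_derivative (\<lambda>h. h *\<^sub>R (S' *\<^sub>R (g1 t + u0 *\<^sub>R x1 t) + U' *\<^sub>R \<xi> t))) (at 0)"
    proof -
      have "((F \<circ> \<sigma>) has_derivative ((\<lambda>h. fst h *\<^sub>R (g1 t + u0 *\<^sub>R x1 t) + snd h *\<^sub>R \<xi> t) \<circ> (\<lambda>h. h *\<^sub>R v))) (at 0)"
        using diff_chain_at[OF Dsig] FDp sig0 by simp
      then show ?thesis unfolding S'_def U'_def by (simp add: o_def algebra_simps)
    qed
    define z where "z = g (0, 0)"
    have zZ: "z \<in> Z" unfolding z_def using gZ[OF pU] \<phi>p by simp
    have r2: "((F \<circ> \<sigma>) has_derivative (\<lambda>h. D\<Psi>i z (h *\<^sub>R axis 3 1))) (at 0)"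
    proof -
      have dgc: "((g \<circ> (\<lambda>\<tau>::real. (0::real, \<tau>))) has_derivative (Dg (0, 0) \<circ> (\<lambda>h. (0, h)))) (at 0)"
        using diff_chain_at[OF emb dgm] by simp
      have d1: "((\<Psi>i \<circ> (g \<circ> (\<lambda>\<tau>::real. (0::real, \<tau>)))) has_derivative (D\<Psi>i z \<circ> (Dg (0, 0) \<circ> (\<lambda>h. (0, h))))) (at 0)"
        using diff_chain_at[OF dgc, of \<Psi>i "D\<Psi>i z"] D\<Psi>i zZ unfolding z_def by simp
      have eqf: "(D\<Psi>i z \<circ> (Dg (0, 0) \<circ> (\<lambda>h. (0, h)))) = (\<lambda>h. D\<Psi>i z (h *\<^sub>R axis 3 1))"
        unfolding Dg_def by auto
      have eqs: "\<And>\<tau>. \<tau> \<in> T \<Longrightarrow> (\<Psi>i \<circ> (g \<circ> (\<lambda>\<tau>::real. (0::real, \<tau>)))) \<tau> = (F \<circ> \<sigma>) \<tau>"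
      proof -
        fix \<tau> assume "\<tau> \<in> T"
        then have tv: "(0, \<tau>) \<in> V" unfolding T_def by simp
        have "F (\<phi>i (0, \<tau>)) = \<Psi>i (g (\<phi> (\<phi>i (0, \<tau>))))" using Ffac inv2[OF tv] by blast
        then show "(\<Psi>i \<circ> (g \<circ> (\<lambda>\<tau>::real. (0::real, \<tau>)))) \<tau> = (F \<circ> \<sigma>) \<tau>"
          using inv2[OF tv] unfolding \<sigma>_def by simp
      qed
      have "((F \<circ> \<sigma>) has_derivative (D\<Psi>i z \<circ> (Dg (0, 0) \<circ> (\<lambda>h. (0, h))))) (at 0)"
        by (rule has_derivative_transform_within_open[OF d1 oT T0 eqs])
      then show ?thesis unfolding eqf .
    qed
    have "(\<lambda>h. h *\<^sub>R (S' *\<^sub>R (g1 t + u0 *\<^sub>R x1 t) + U' *\<^sub>R \<xi> t)) = (\<lambda>h. D\<Psi>i z (h *\<^sub>R axis 3 1))"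
      using has_derivative_unique[OF r1 r2] .
    from fun_cong[OF this, of 1] have eq1: "S' *\<^sub>R (g1 t + u0 *\<^sub>R x1 t) + U' *\<^sub>R \<xi> t = D\<Psi>i z (axis 3 1)"
      by simp
    have "- (1 / A t) * (Bc t * A t * S') + U' * A t = 0" using rel A't unfolding u0_def by simp
    then have "- (Bc t * S') + U' * A t = 0" using At by simp
    then have "S' * (- Bc t / A t) + U' = 0" using At by (simp add: field_simps)
    then have "(S' * (- Bc t / A t) + U') *\<^sub>R \<xi> t = 0" by simp
    then have "S' *\<^sub>R (g1 t + u0 *\<^sub>R x1 t) + U' *\<^sub>R \<xi> t = 0"
      unfolding key0 by (simp only: scaleR_add_left scaleR_scaleR)
    then have "D\<Psi>i z (axis 3 1) = 0" using eq1 by simp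
    moreover have "linear (D\<Psi> (\<Psi>i z))" using D\<Psi> inv4[OF zZ] has_derivative_linear by blast
    then have "D\<Psi> (\<Psi>i z) 0 = 0" by (rule linear_0)
    ultimately have "axis 3 1 = (0::real^3)" using rinv\<Psi>[OF zZ, of "axis 3 1"] by simp
    then show False by (simp add: axis_eq_0_iff)
  qed
  show ?thesis using sing notcusp unfolding F_def by blast
qed

end
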